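(* Let $X$ be a $0$-dimensional, $\mathbb N$-compact space of non-measurable cardinality. Then the evaluation map $\mathcal E:C_p(X,\mathbb Z)\to\widehat{\widehat{C_p(X,\mathbb Z)}}$ is a topological isomorphism of $C_p(X,\mathbb Z)$ onto its image.
   Context: Spaces are Tikhonov; $0$-dimensional means having a base of clopen sets; $\mathbb N$-compact means homeomorphic to a closed subspace of a product of copies of the discrete space $\mathbb N$. $C_p(X,\mathbb Z)$ is the group of continuous functions $X\to\mathbb Z$ ($\mathbb Z$ discrete) with the topology of pointwise convergence. For a topological abelian group $G$, $\widehat G$ is the group of continuous homomorphisms into $\mathbb T=\mathbb R/\mathbb Z$ with the compact-open topology, and $\mathcal E(g)(\chi)=\chi(g)$. *)

theory Defs
  imports "HOL-Analysis.Analysis"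
begin

definition tikhonov_space :: "'a topology \<Rightarrow> bool" where
  "tikhonov_space X \<longleftrightarrow> completely_regular_space X \<and> t1_space X"

definition zero_dimensional :: "'a topology \<Rightarrow> bool" where
  "zero_dimensional X \<longleftrightarrow> neighbourhood_base_of (\<lambda>U. closedin X U \<and> openin X U) X"

definition nat_power :: "'i set \<Rightarrow> ('i \<Rightarrow> nat) topology" where
  "nat_power I = product_topology (\<lambda>_. discrete_topology (UNIV :: nat set)) I"

text \<open>The index set is taken inside the type of functions from the points to N; this loses
  no generality (an index set of size at most |C(X,N)| always suffices).\<close>
definition N_compact :: "'a topology \<Rightarrow> bool" where
  "N_compact X \<longleftrightarrow> (\<exists>(I :: ('a \<Rightarrow> nat) set) (f :: 'a \<Rightarrow> (('a \<Rightarrow> nat) \<Rightarrow> nat)).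
      closedin (nat_power I) (f ` topspace X) \<and>
      homeomorphic_map X (subtopology (nat_power I) (f ` topspace X)) f)"

text \<open>A set S has measurable cardinality iff there is a free (non-principal) ultrafilter
  on S closed under countable intersections (equivalently a nontrivial countably additive
  two-valued measure on all subsets of S vanishing on singletons).\<close>
definition measurable_cardinality :: "'a set \<Rightarrow> bool" where
  "measurable_cardinality S \<longleftrightarrow> (\<exists>\<F> :: 'a set set.
      \<F> \<subseteq> Pow S \<and> S \<in> \<F> \<and> {} \<notin> \<F> \<and>
      (\<forall>A B. A \<in> \<F> \<and> A \<subseteq> B \<and> B \<subseteq> S \<longrightarrow> B \<in> \<F>) \<and>
      (\<forall>A. A \<subseteq> S \<longrightarrow> A \<in> \<F> \<or> S - A \<in> \<F>) \<and>
      (\<forall>\<C>. countable \<C> \<and> \<C> \<noteq> {} \<and> \<C> \<subseteq> \<F> \<longrightarrow> \<Inter>\<C> \<in> \<F>) \<and>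
      (\<forall>x\<in>S. {x} \<notin> \<F>))"

definition Cp_carrier :: "'a topology \<Rightarrow> ('a \<Rightarrow> int) set" where
  "Cp_carrier X = {f. continuous_map X (discrete_topology (UNIV :: int set)) f \<and>
                      f \<in> extensional (topspace X)}"

definition Cp_top :: "'a topology \<Rightarrow> ('a \<Rightarrow> int) topology" where
  "Cp_top X = subtopology (product_topology (\<lambda>_. discrete_topology (UNIV :: int set)) (topspace X))
                          (Cp_carrier X)"

definition Cp_add :: "'a topology \<Rightarrow> ('a \<Rightarrow> int) \<Rightarrow> ('a \<Rightarrow> int) \<Rightarrow> ('a \<Rightarrow> int)" where
  "Cp_add X f g = restrict (\<lambda>x. f x + g x) (topspace X)"

text \<open>The circle group T = R/Z, realised (isomorphically, as a topological group) as the
  multiplicative unit circle in C.\<close>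
definition circle :: "complex set" where
  "circle = {z. cmod z = 1}"

text \<open>A topological abelian group is given by its topology G (carrier = topspace G) and its
  addition. Characters: continuous homomorphisms into the circle (extensional).\<close>
definition characters :: "'g topology \<Rightarrow> ('g \<Rightarrow> 'g \<Rightarrow> 'g) \<Rightarrow> ('g \<Rightarrow> complex) set" where
  "characters G add = {c. continuous_map G (subtopology euclidean circle) c \<and>
      (\<forall>x\<in>topspace G. \<forall>y\<in>topspace G. c (add x y) = c x * c y) \<and>
      c \<in> extensional (topspace G)}"

definition dual_top :: "'g topology \<Rightarrow> ('g \<Rightarrow> 'g \<Rightarrow> 'g) \<Rightarrow> ('g \<Rightarrow> complex) topology" where
  "dual_top G add = topology_generated_by
     {{c \<in> characters G add. c ` K \<subseteq> U} | K U. compactin G K \<and> open U}"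

definition dual_add :: "'g topology \<Rightarrow> ('g \<Rightarrow> complex) \<Rightarrow> ('g \<Rightarrow> complex) \<Rightarrow> ('g \<Rightarrow> complex)" where
  "dual_add G c d = restrict (\<lambda>x. c x * d x) (topspace G)"

definition evaluation :: "'g topology \<Rightarrow> ('g \<Rightarrow> 'g \<Rightarrow> 'g) \<Rightarrow> 'g \<Rightarrow> (('g \<Rightarrow> complex) \<Rightarrow> complex)" where
  "evaluation G add g = restrict (\<lambda>c. c g) (characters G add)"

definition top_iso_onto_image ::
  "'g topology \<Rightarrow> ('g \<Rightarrow> 'g \<Rightarrow> 'g) \<Rightarrow> 'h topology \<Rightarrow> ('h \<Rightarrow> 'h \<Rightarrow> 'h) \<Rightarrow> ('g \<Rightarrow> 'h) \<Rightarrow> bool" where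
  "top_iso_onto_image G add H addH f \<longleftrightarrow>
     f ` topspace G \<subseteq> topspace H \<and>
     (\<forall>x\<in>topspace G. \<forall>y\<in>topspace G. f (add x y) = addH (f x) (f y)) \<and>
     homeomorphic_map G (subtopology H (f ` topspace G)) f"

end

theory Submission
  imports Defs
begin

lemma cont_discrete_iff:
  "continuous_map X (discrete_topology (UNIV::'b set)) f \<longleftrightarrow>
    (\<forall>x\<in>topspace X. \<exists>U. openin X U \<and> x \<in> U \<and> (\<forall>y\<in>U. f y = f x))"
proof
  assume c: "continuous_map X (discrete_topology (UNIV::'b set)) f"
  show "\<forall>x\<in>topspace X. \<exists>U. openin X U \<and> x \<in> U \<and> (\<forall>y\<in>U. f y = f x)"
  proof
    fix x assume x: "x \<in> topspace X"
    have "\<forall>V. openin X {y \<in> topspace X. f y \<in> V}"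
      using c by (simp add: continuous_map_def)
    then have "openin X {y \<in> topspace X. f y \<in> {f x}}" by blast
    then show "\<exists>U. openin X U \<and> x \<in> U \<and> (\<forall>y\<in>U. f y = f x)"
      using x by (intro exI[of _ "{y \<in> topspace X. f y \<in> {f x}}"]) auto
  qed
next
  assume L: "\<forall>x\<in>topspace X. \<exists>U. openin X U \<and> x \<in> U \<and> (\<forall>y\<in>U. f y = f x)"
  show "continuous_map X (discrete_topology (UNIV::'b set)) f"
    unfolding continuous_map_def
  proof (intro conjI allI impI)
    fix V :: "'b set"
    show "openin X {x \<in> topspace X. f x \<in> V}"
    proof (subst openin_subopen, intro ballI)
      fix x assume "x \<in> {x \<in> topspace X. f x \<in> V}"
      then obtain U where "openin X U" "x \<in> U" "\<forall>y\<in>U. f y = f x" using L by auto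
      then show "\<exists>T. openin X T \<and> x \<in> T \<and> T \<subseteq> {x \<in> topspace X. f x \<in> V}"
        using \<open>x \<in> {x \<in> topspace X. f x \<in> V}\<close> openin_subset by (intro exI[of _ U]) fastforce
    qed
  qed auto
qed

lemma topspace_Cp [simp]: "topspace (Cp_top X) = Cp_carrier X"
proof -
  have "Cp_carrier X \<subseteq> topspace (product_topology (\<lambda>_. discrete_topology (UNIV :: int set)) (topspace X))"
    by (auto simp: Cp_carrier_def topspace_product_topology_alt extensional_def)
  then show ?thesis unfolding Cp_top_def by auto
qed

lemma openin_Cp:
  "openin (Cp_top X) U \<longleftrightarrow> U \<subseteq> Cp_carrier X \<and>
     (\<forall>f\<in>U. \<exists>F. finite F \<and> F \<subseteq> topspace X \<and> (\<forall>g\<in>Cp_carrier X. (\<forall>x\<in>F. g x = f x) \<longrightarrow> g \<in> U))"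
proof
  assume o: "openin (Cp_top X) U"
  then obtain T where T: "openin (product_topology (\<lambda>_. discrete_topology (UNIV :: int set)) (topspace X)) T"
     and U: "U = T \<inter> Cp_carrier X"
    unfolding Cp_top_def openin_subtopology by auto
  have "\<exists>F. finite F \<and> F \<subseteq> topspace X \<and> (\<forall>g\<in>Cp_carrier X. (\<forall>x\<in>F. g x = f x) \<longrightarrow> g \<in> U)"
    if f: "f \<in> U" for f
  proof -
    from T f U obtain V where V: "finite {i \<in> topspace X. V i \<noteq> UNIV}" "f \<in> Pi\<^sub>E (topspace X) V"
      "Pi\<^sub>E (topspace X) V \<subseteq> T"
      unfolding openin_product_topology_alt by force
    show ?thesis
    proof (intro exI conjI ballI impI)
      fix g assume g: "g \<in> Cp_carrier X" "\<forall>x\<in>{i \<in> topspace X. V i \<noteq> UNIV}. g x = f x"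
      have "g \<in> Pi\<^sub>E (topspace X) V"
        using g V(2) by (auto simp: PiE_iff Cp_carrier_def)
      then show "g \<in> U" using V(3) U g(1) by auto
    qed (use V in auto)
  qed
  then show "U \<subseteq> Cp_carrier X \<and>
     (\<forall>f\<in>U. \<exists>F. finite F \<and> F \<subseteq> topspace X \<and> (\<forall>g\<in>Cp_carrier X. (\<forall>x\<in>F. g x = f x) \<longrightarrow> g \<in> U))"
    using U by auto
next
  assume R: "U \<subseteq> Cp_carrier X \<and>
     (\<forall>f\<in>U. \<exists>F. finite F \<and> F \<subseteq> topspace X \<and> (\<forall>g\<in>Cp_carrier X. (\<forall>x\<in>F. g x = f x) \<longrightarrow> g \<in> U))"
  show "openin (Cp_top X) U"
  proof (subst openin_subopen, intro ballI)
    fix f assume f: "f \<in> U"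
    then obtain F where F: "finite F" "F \<subseteq> topspace X" "\<forall>g\<in>Cp_carrier X. (\<forall>x\<in>F. g x = f x) \<longrightarrow> g \<in> U"
      using R by blast
    define B where "B = (\<lambda>i. if i \<in> F then {f i} else (UNIV :: int set))"
    have "openin (product_topology (\<lambda>_. discrete_topology (UNIV :: int set)) (topspace X)) (Pi\<^sub>E (topspace X) B)"
      by (rule product_topology_basis) (use F(1) in \<open>auto simp: B_def intro: finite_subset\<close>)
    then have "openin (Cp_top X) (Cp_carrier X \<inter> Pi\<^sub>E (topspace X) B)"
      unfolding Cp_top_def by (rule openin_subtopology_Int2)
    moreover have "f \<in> Cp_carrier X \<inter> Pi\<^sub>E (topspace X) B"
      using f R F(2) by (auto simp: B_def Cp_carrier_def PiE_iff)
    moreover have "Cp_carrier X \<inter> Pi\<^sub>E (topspace X) B \<subseteq> U"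
      using F(2,3) by (auto simp: B_def PiE_iff) (metis singletonD subsetD)
    ultimately show "\<exists>T. openin (Cp_top X) T \<and> f \<in> T \<and> T \<subseteq> U" by blast
  qed
qed

lemma circle_doubling:
  fixes w :: complex assumes "cmod w = 1"
  shows "(cmod (w^2 - 1))^2 = (cmod (w - 1))^2 * (4 - (cmod (w - 1))^2)"
proof -
  obtain a b where w: "w = Complex a b" by (cases w)
  have "(cmod w)^2 = a^2 + b^2" by (simp add: w cmod_power2)
  then have ab: "a^2 + b^2 = 1" using assms by simp
  have "w^2 - 1 = Complex (a^2 - b^2 - 1) (2*a*b)" by (simp add: w power2_eq_square Complex_eq algebra_simps)
  then have l: "(cmod (w^2 - 1))^2 = (a^2 - b^2 - 1)^2 + (2*a*b)^2" by (simp add: cmod_power2)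
  have r: "(cmod (w - 1))^2 = (a - 1)^2 + b^2" by (simp add: w cmod_power2)
  have bb: "b^2 = 1 - a^2" using ab by simp
  have e: "(2*a*b)^2 = 4*a^2*b^2" by (simp add: power_mult_distrib)
  have "(a^2 - b^2 - 1)^2 + (2*a*b)^2 = (2*a^2 - 2)^2 + 4*a^2*(1 - a^2)"
    unfolding e bb by (simp add: power2_eq_square algebra_simps)
  also have "\<dots> = ((a - 1)^2 + (1 - a^2)) * (4 - ((a - 1)^2 + (1 - a^2)))"
    by (simp add: power2_eq_square algebra_simps)
  finally show ?thesis unfolding l r using bb by simp
qed

lemma sq_lt1: "cmod x < 1 \<Longrightarrow> (cmod x)^2 < 1"
proof -
  assume "cmod x < 1"
  then have "cmod x * cmod x < 1 * 1" by (intro mult_strict_mono) auto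
  then show ?thesis by (simp add: power2_eq_square)
qed

lemma circle_small_powers:
  fixes z :: complex assumes "cmod z = 1" and small: "\<And>n. cmod (z^n - 1) < 1"
  shows "z = 1"
proof (rule ccontr)
  assume "z \<noteq> 1"
  define d where "d = (\<lambda>w::complex. (cmod (w - 1))^2)"
  have d0: "d z > 0" using \<open>z \<noteq> 1\<close> by (simp add: d_def)
  have grow: "d (z^(2^k)) \<ge> 3^k * d z" for k
  proof (induction k)
    case 0 then show ?case by simp
  next
    case (Suc k)
    let ?w = "z^(2^k)"
    have w1: "cmod ?w = 1" using assms(1) by (simp add: norm_power)
    have "d ?w < 1" using sq_lt1[OF small[of "2^k"]] by (simp add: d_def)
    have "d (?w^2) = d ?w * (4 - d ?w)" using circle_doubling[OF w1] by (simp add: d_def)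
    also have "\<dots> \<ge> d ?w * 3" using \<open>d ?w < 1\<close> by (intro mult_left_mono) (auto simp: d_def)
    finally have "d (?w^2) \<ge> 3 * d ?w" by simp
    moreover have "?w^2 = z^(2^Suc k)" by (simp add: power_mult[symmetric] mult.commute)
    ultimately show ?case using Suc by simp
  qed
  obtain k where "1 / d z < 3^k" using real_arch_pow[of 3 "1 / d z"] by auto
  then have h1: "1 < 3^k * d z" using d0 by (simp add: field_simps)
  have h2: "3^k * d z \<le> d (z^(2^k))" by (rule grow)
  have h3: "d (z^(2^k)) < 1" using sq_lt1[OF small[of "2^k"]] by (simp add: d_def)
  show False using h1 h2 h3 by linarith
qed

definition loc_const :: "'a topology \<Rightarrow> ('a \<Rightarrow> 'b) \<Rightarrow> bool" where
  "loc_const X h \<longleftrightarrow> (\<forall>x\<in>topspace X. \<exists>U. openin X U \<and> x \<in> U \<and> (\<forall>y\<in>U. h y = h x))"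

lemma Cp_carrier_iff: "f \<in> Cp_carrier X \<longleftrightarrow> loc_const X f \<and> f \<in> extensional (topspace X)"
  by (simp add: Cp_carrier_def cont_discrete_iff loc_const_def)

lemma loc_const_restrict: "loc_const X h \<Longrightarrow> loc_const X (restrict h (topspace X))"
  unfolding loc_const_def
proof (intro ballI)
  fix x assume h: "\<forall>x\<in>topspace X. \<exists>U. openin X U \<and> x \<in> U \<and> (\<forall>y\<in>U. h y = h x)" and x: "x \<in> topspace X"
  then obtain U where U: "openin X U" "x \<in> U" "\<forall>y\<in>U. h y = h x" by blast
  have "U \<subseteq> topspace X" using U(1) by (rule openin_subset)
  then have "\<forall>y\<in>U. restrict h (topspace X) y = restrict h (topspace X) x"
    using U(3) x by (metis restrict_apply' subsetD)
  then show "\<exists>U. openin X U \<and> x \<in> U \<and> (\<forall>y\<in>U. restrict h (topspace X) y = restrict h (topspace X) x)"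
    using U by blast
qed

lemma loc_const_comb: "loc_const X f \<Longrightarrow> loc_const X g \<Longrightarrow> loc_const X (\<lambda>x. \<phi> (f x) (g x))"
  unfolding loc_const_def
proof (intro ballI)
  fix x assume f: "\<forall>x\<in>topspace X. \<exists>U. openin X U \<and> x \<in> U \<and> (\<forall>y\<in>U. f y = f x)"
    and g: "\<forall>x\<in>topspace X. \<exists>U. openin X U \<and> x \<in> U \<and> (\<forall>y\<in>U. g y = g x)"
    and x: "x \<in> topspace X"
  obtain U where U: "openin X U" "x \<in> U" "\<forall>y\<in>U. f y = f x" using f x by blast
  obtain V where V: "openin X V" "x \<in> V" "\<forall>y\<in>V. g y = g x" using g x by blast
  show "\<exists>U. openin X U \<and> x \<in> U \<and> (\<forall>y\<in>U. \<phi> (f y) (g y) = \<phi> (f x) (g x))"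
  proof (intro exI[of _ "U \<inter> V"] conjI ballI)
    fix y assume "y \<in> U \<inter> V"
    then have "f y = f x" "g y = g x" using U V by blast+
    then show "\<phi> (f y) (g y) = \<phi> (f x) (g x)" by (rule arg_cong2)
  qed (use U V in auto)
qed

lemma loc_const_const: "loc_const X (\<lambda>x. c)"
  unfolding loc_const_def using openin_topspace by blast

lemma loc_const_id: "f \<in> Cp_carrier X \<Longrightarrow> loc_const X f"
  by (simp add: Cp_carrier_iff)

lemma loc_const_clopen: "closedin X V \<Longrightarrow> openin X V \<Longrightarrow> loc_const X (\<lambda>x. x \<in> V)"
  unfolding loc_const_def
proof (intro ballI)
  fix x assume c: "closedin X V" and o: "openin X V" and x: "x \<in> topspace X"
  show "\<exists>U. openin X U \<and> x \<in> U \<and> (\<forall>y\<in>U. (y \<in> V) = (x \<in> V))"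
  proof (cases "x \<in> V")
    case True then show ?thesis using o by blast
  next
    case False
    then show ?thesis using c x by (intro exI[of _ "topspace X - V"]) (auto simp: closedin_def)
  qed
qed

lemma restrict_in_Cp: "loc_const X h \<Longrightarrow> restrict h (topspace X) \<in> Cp_carrier X"
  by (simp add: Cp_carrier_iff loc_const_restrict)

definition cz :: "'a topology \<Rightarrow> 'a \<Rightarrow> int" where "cz X = restrict (\<lambda>x. 0) (topspace X)"
definition csub :: "'a topology \<Rightarrow> ('a \<Rightarrow> int) \<Rightarrow> ('a \<Rightarrow> int) \<Rightarrow> 'a \<Rightarrow> int" where
  "csub X f g = restrict (\<lambda>x. f x - g x) (topspace X)"
definition cscale :: "'a topology \<Rightarrow> int \<Rightarrow> ('a \<Rightarrow> int) \<Rightarrow> 'a \<Rightarrow> int" where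
  "cscale X n f = restrict (\<lambda>x. n * f x) (topspace X)"
definition ccut :: "'a topology \<Rightarrow> 'a set \<Rightarrow> ('a \<Rightarrow> int) \<Rightarrow> 'a \<Rightarrow> int" where
  "ccut X V f = restrict (\<lambda>x. if x \<in> V then f x else 0) (topspace X)"

lemma cz_in [simp]: "cz X \<in> Cp_carrier X"
  unfolding cz_def by (rule restrict_in_Cp) (rule loc_const_const)

lemma Cp_add_in [simp]: "f \<in> Cp_carrier X \<Longrightarrow> g \<in> Cp_carrier X \<Longrightarrow> Cp_add X f g \<in> Cp_carrier X"
  unfolding Cp_add_def
  by (rule restrict_in_Cp, rule loc_const_comb[where \<phi>="\<lambda>a b. a + b"]; rule loc_const_id; simp)

lemma csub_in [simp]: "f \<in> Cp_carrier X \<Longrightarrow> g \<in> Cp_carrier X \<Longrightarrow> csub X f g \<in> Cp_carrier X"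
  unfolding csub_def
  by (rule restrict_in_Cp, rule loc_const_comb[where \<phi>="\<lambda>a b. a - b"]; rule loc_const_id; simp)

lemma cscale_in [simp]: "f \<in> Cp_carrier X \<Longrightarrow> cscale X n f \<in> Cp_carrier X"
  unfolding cscale_def
  by (rule restrict_in_Cp, rule loc_const_comb[where \<phi>="\<lambda>a b. a * b" and f="\<lambda>x. n"], rule loc_const_const, rule loc_const_id, simp)

lemma ccut_in [simp]: "f \<in> Cp_carrier X \<Longrightarrow> closedin X V \<Longrightarrow> openin X V \<Longrightarrow> ccut X V f \<in> Cp_carrier X"
  unfolding ccut_def
  by (rule restrict_in_Cp, rule loc_const_comb[where \<phi>="\<lambda>a b. if b then a else 0" and g="\<lambda>x. x \<in> V"], rule loc_const_id, simp, rule loc_const_clopen, simp_all)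

lemma Cp_ext: "f \<in> Cp_carrier X \<Longrightarrow> x \<notin> topspace X \<Longrightarrow> f x = undefined"
  by (simp add: Cp_carrier_def extensional_def)

lemma Cp_eqI: "f \<in> Cp_carrier X \<Longrightarrow> g \<in> Cp_carrier X \<Longrightarrow> (\<And>x. x \<in> topspace X \<Longrightarrow> f x = g x) \<Longrightarrow> f = g"
  by (metis Cp_ext ext)

lemma Cp_ops_apply [simp]:
  "x \<in> topspace X \<Longrightarrow> cz X x = 0"
  "x \<in> topspace X \<Longrightarrow> Cp_add X f g x = f x + g x"
  "x \<in> topspace X \<Longrightarrow> csub X f g x = f x - g x"
  "x \<in> topspace X \<Longrightarrow> cscale X n f x = n * f x"
  "x \<in> topspace X \<Longrightarrow> ccut X V f x = (if x \<in> V then f x else 0)"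
  by (auto simp: cz_def Cp_add_def csub_def cscale_def ccut_def)

section \<open>Characters of Cp\<close>

abbreviation "chars X \<equiv> characters (Cp_top X) (Cp_add X)"

lemma char_circle: "c \<in> chars X \<Longrightarrow> f \<in> Cp_carrier X \<Longrightarrow> c f \<in> circle"
  unfolding characters_def
  using continuous_map_image_subset_topspace by fastforce

lemma char_nz: "c \<in> chars X \<Longrightarrow> f \<in> Cp_carrier X \<Longrightarrow> c f \<noteq> 0"
  using char_circle[of c X f] by (auto simp: circle_def)

lemma char_hom: "c \<in> chars X \<Longrightarrow> f \<in> Cp_carrier X \<Longrightarrow> g \<in> Cp_carrier X \<Longrightarrow> c (Cp_add X f g) = c f * c g"
  unfolding characters_def by simp

lemma char_zero: assumes "c \<in> chars X" shows "c (cz X) = 1"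
proof -
  have "Cp_add X (cz X) (cz X) = cz X" by (rule Cp_eqI[where X=X]) auto
  then have "c (cz X) = c (cz X) * c (cz X)" using char_hom[OF assms cz_in cz_in] by simp
  then show ?thesis using char_nz[OF assms cz_in] by simp
qed

lemma char_sub: assumes "c \<in> chars X" "f \<in> Cp_carrier X" "g \<in> Cp_carrier X"
  shows "c f = c (csub X f g) * c g"
proof -
  have "Cp_add X (csub X f g) g = f" by (rule Cp_eqI[where X=X]) (use assms in auto)
  then show ?thesis using char_hom[OF assms(1) csub_in[OF assms(2,3)] assms(3)] by simp
qed

lemma char_scale: assumes "c \<in> chars X" "f \<in> Cp_carrier X"
  shows "c (cscale X (int n) f) = c f ^ n"
proof (induction n)
  case 0
  have "cscale X (int 0) f = cz X" by (rule Cp_eqI[where X=X]) (use assms in auto)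
  then show ?case using char_zero[OF assms(1)] by simp
next
  case (Suc n)
  have "cscale X (int (Suc n)) f = Cp_add X f (cscale X (int n) f)"
    by (rule Cp_eqI[where X=X]) (use assms in \<open>auto simp: algebra_simps\<close>)
  then show ?case using char_hom[OF assms(1) assms(2) cscale_in[OF assms(2)]] Suc by simp
qed

definition kills :: "'a topology \<Rightarrow> (('a \<Rightarrow> int) \<Rightarrow> complex) \<Rightarrow> 'a set \<Rightarrow> bool" where
  "kills X c F \<longleftrightarrow> (\<forall>g\<in>Cp_carrier X. (\<forall>x\<in>F. g x = 0) \<longrightarrow> c g = 1)"

lemma kills_agree:
  assumes "c \<in> chars X" "kills X c F" "F \<subseteq> topspace X" "f \<in> Cp_carrier X" "g \<in> Cp_carrier X"
    "\<And>x. x \<in> F \<Longrightarrow> f x = g x"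
  shows "c f = c g"
proof -
  have "c (csub X f g) = 1" using assms by (auto simp: kills_def subsetD)
  then show ?thesis using char_sub[OF assms(1,4,5)] by simp
qed

lemma kills_mono: "kills X c F \<Longrightarrow> F \<subseteq> G \<Longrightarrow> kills X c G"
  unfolding kills_def by blast

lemma char_finite_kill:
  assumes c: "c \<in> chars X"
  shows "\<exists>F. finite F \<and> F \<subseteq> topspace X \<and> kills X c F"
proof -
  have cm: "continuous_map (Cp_top X) (subtopology euclidean circle) c"
    using c by (simp add: characters_def)
  have "openin (subtopology euclidean circle) (circle \<inter> ball 1 1)"
    by (intro openin_subtopology_Int2) auto
  then have "openin (Cp_top X) {g \<in> topspace (Cp_top X). c g \<in> circle \<inter> ball 1 1}"
    using cm by (rule openin_continuous_map_preimage[rotated])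
  then have o: "openin (Cp_top X) {g \<in> Cp_carrier X. c g \<in> circle \<inter> ball 1 1}" by simp
  have "cz X \<in> {g \<in> Cp_carrier X. c g \<in> circle \<inter> ball 1 1}"
    using char_zero[OF c] by (auto simp: circle_def)
  then obtain F where F: "finite F" "F \<subseteq> topspace X"
    "\<forall>g\<in>Cp_carrier X. (\<forall>x\<in>F. g x = cz X x) \<longrightarrow> g \<in> {g \<in> Cp_carrier X. c g \<in> circle \<inter> ball 1 1}"
    using o unfolding openin_Cp by blast
  have "kills X c F"
    unfolding kills_def
  proof (intro ballI impI)
    fix g assume g: "g \<in> Cp_carrier X" "\<forall>x\<in>F. g x = 0"
    have "cmod (c g ^ n - 1) < 1" for n
    proof -
      have "cscale X (int n) g \<in> {g \<in> Cp_carrier X. c g \<in> circle \<inter> ball 1 1}"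
        using F(2,3) g by (auto simp: subsetD)
      then show ?thesis using char_scale[OF c g(1)] by (simp add: dist_norm norm_minus_commute)
    qed
    moreover have "cmod (c g) = 1" using char_circle[OF c g(1)] by (simp add: circle_def)
    ultimately show "c g = 1" using circle_small_powers by blast
  qed
  then show ?thesis using F by blast
qed

lemma continuous_map_cmult:
  "\<lbrakk>continuous_map X euclidean f; continuous_map X euclidean g\<rbrakk>
   \<Longrightarrow> continuous_map X euclidean (\<lambda>x. f x * (g x :: complex))"
  by (simp add: continuous_map_atin tendsto_mult)

lemma topspace_dual [simp]: "topspace (dual_top G add) = characters G add"
proof -
  have "characters G add \<in> {{c \<in> characters G add. c ` K \<subseteq> U} | K U. compactin G K \<and> open U}"
    by (rule CollectI, rule exI[of _ "{}"], rule exI[of _ UNIV]) auto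
  then show ?thesis unfolding dual_top_def topology_generated_by_topspace by auto
qed

lemma openin_dual_sub:
  "compactin G K \<Longrightarrow> open U \<Longrightarrow> openin (dual_top G add) {c \<in> characters G add. c ` K \<subseteq> U}"
  unfolding dual_top_def by (rule topology_generated_by_Basis) blast

lemma continuous_into_dual:
  assumes "\<And>t. t \<in> topspace T \<Longrightarrow> h t \<in> characters G add"
    and "\<And>K U. compactin G K \<Longrightarrow> open U \<Longrightarrow> openin T {t \<in> topspace T. h t ` K \<subseteq> U}"
  shows "continuous_map T (dual_top G add) h"
  unfolding dual_top_def
proof (rule continuous_on_generated_topo)
  fix V assume "V \<in> {{c \<in> characters G add. c ` K \<subseteq> U} | K U. compactin G K \<and> open U}"
  then obtain K U where KU: "compactin G K" "open U" "V = {c \<in> characters G add. c ` K \<subseteq> U}" by blast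
  have "h -` V \<inter> topspace T = {t \<in> topspace T. h t ` K \<subseteq> U}" using KU(3) assms(1) by auto
  then show "openin T (h -` V \<inter> topspace T)" using assms(2)[OF KU(1,2)] by simp
next
  have "\<Union> {{c \<in> characters G add. c ` K \<subseteq> U} | K U. compactin G K \<and> open U} = characters G add"
    using topspace_dual[of G add] unfolding dual_top_def topology_generated_by_topspace .
  then show "h ` topspace T \<subseteq> \<Union> {{c \<in> characters G add. c ` K \<subseteq> U} | K U. compactin G K \<and> open U}"
    using assms(1) by auto
qed

lemma char_cont_euclidean: "c \<in> characters G add \<Longrightarrow> continuous_map G euclidean c"
  unfolding characters_def using continuous_map_into_fulltopology by blast

lemma char_in_circle: "c \<in> characters G add \<Longrightarrow> x \<in> topspace G \<Longrightarrow> c x \<in> circle"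
  unfolding characters_def using continuous_map_image_subset_topspace by fastforce

lemma dual_add_in:
  assumes c: "c \<in> characters G add" and d: "d \<in> characters G add"
    and comm: "\<And>x y. x \<in> topspace G \<Longrightarrow> y \<in> topspace G \<Longrightarrow> add x y = add y x"
    and closed: "\<And>x y. x \<in> topspace G \<Longrightarrow> y \<in> topspace G \<Longrightarrow> add x y \<in> topspace G"
  shows "dual_add G c d \<in> characters G add"
proof -
  have "continuous_map G euclidean (\<lambda>x. c x * d x)"
    by (intro continuous_map_cmult char_cont_euclidean[OF c] char_cont_euclidean[OF d])
  then have "continuous_map G euclidean (dual_add G c d)"
    by (rule continuous_map_eq) (simp add: dual_add_def)
  moreover have "dual_add G c d ` topspace G \<subseteq> circle"
    using char_in_circle[OF c] char_in_circle[OF d] by (auto simp: dual_add_def circle_def norm_mult)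
  ultimately have "continuous_map G (subtopology euclidean circle) (dual_add G c d)"
    by (simp add: continuous_map_in_subtopology image_subset_iff_funcset)
  moreover have "\<forall>x\<in>topspace G. \<forall>y\<in>topspace G. dual_add G c d (add x y) = dual_add G c d x * dual_add G c d y"
    using c d closed unfolding characters_def dual_add_def by (auto simp: algebra_simps)
  moreover have "dual_add G c d \<in> extensional (topspace G)" by (simp add: dual_add_def)
  ultimately show ?thesis unfolding characters_def by blast
qed

lemma Cp_add_comm: "f \<in> Cp_carrier X \<Longrightarrow> g \<in> Cp_carrier X \<Longrightarrow> Cp_add X f g = Cp_add X g f"
  by (rule Cp_eqI[where X=X]) auto

abbreviation "DUAL X \<equiv> dual_top (Cp_top X) (Cp_add X)"
abbreviation "EV X \<equiv> evaluation (Cp_top X) (Cp_add X)"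

lemma dual_add_Cp_in: "c \<in> chars X \<Longrightarrow> d \<in> chars X \<Longrightarrow> dual_add (Cp_top X) c d \<in> chars X"
  by (rule dual_add_in) (auto simp: Cp_add_comm)

lemma EV_apply: "c \<in> chars X \<Longrightarrow> EV X f c = c f"
  by (simp add: evaluation_def)

lemma EV_in:
  assumes f: "f \<in> Cp_carrier X"
  shows "EV X f \<in> characters (DUAL X) (dual_add (Cp_top X))"
proof -
  have "continuous_map (DUAL X) (subtopology euclidean circle) (EV X f)"
    unfolding continuous_map_def
  proof (intro conjI allI impI)
    show "EV X f \<in> topspace (DUAL X) \<rightarrow> topspace (subtopology euclidean circle)"
      using char_circle f by (auto simp: EV_apply)
    fix V assume "openin (subtopology euclidean circle) V"
    then obtain U where U: "open U" "V = U \<inter> circle" by (auto simp: openin_open)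
    have "{c \<in> topspace (DUAL X). EV X f c \<in> V} = {c \<in> chars X. c ` {f} \<subseteq> U}"
      using U(2) char_circle f by (auto simp: EV_apply)
    moreover have "openin (DUAL X) {c \<in> chars X. c ` {f} \<subseteq> U}"
      by (rule openin_dual_sub) (use f U in auto)
    ultimately show "openin (DUAL X) {c \<in> topspace (DUAL X). EV X f c \<in> V}" by simp
  qed
  moreover have "\<forall>c\<in>topspace (DUAL X). \<forall>d\<in>topspace (DUAL X).
      EV X f (dual_add (Cp_top X) c d) = EV X f c * EV X f d"
  proof (intro ballI)
    fix c d assume cd: "c \<in> topspace (DUAL X)" "d \<in> topspace (DUAL X)"
    then have "dual_add (Cp_top X) c d \<in> chars X" using dual_add_Cp_in by auto
    then show "EV X f (dual_add (Cp_top X) c d) = EV X f c * EV X f d"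
      using cd f by (simp add: EV_apply dual_add_def)
  qed
  moreover have "EV X f \<in> extensional (topspace (DUAL X))" by (simp add: evaluation_def)
  ultimately show ?thesis unfolding characters_def by blast
qed

lemma EV_hom:
  assumes "f \<in> Cp_carrier X" "g \<in> Cp_carrier X"
  shows "EV X (Cp_add X f g) = dual_add (DUAL X) (EV X f) (EV X g)"
  using assms by (auto simp: evaluation_def dual_add_def char_hom fun_eq_iff)

definition char_pt :: "'a topology \<Rightarrow> 'a \<Rightarrow> real \<Rightarrow> ('a \<Rightarrow> int) \<Rightarrow> complex" where
  "char_pt X x s = restrict (\<lambda>g. cis (s * of_int (g x))) (Cp_carrier X)"

lemma eval_pt_cont:
  assumes "x \<in> topspace X"
  shows "continuous_map (Cp_top X) (discrete_topology (UNIV::int set)) (\<lambda>g. g x)"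
  unfolding Cp_top_def
  by (rule continuous_map_from_subtopology, rule continuous_map_product_projection) (use assms in simp)

lemma char_pt_in:
  assumes x: "x \<in> topspace X"
  shows "char_pt X x s \<in> chars X"
proof -
  have "continuous_map (discrete_topology (UNIV::int set)) (subtopology euclidean circle) (\<lambda>k. cis (s * of_int k))"
    by (simp add: continuous_map_from_discrete_topology circle_def)
  then have "continuous_map (Cp_top X) (subtopology euclidean circle) ((\<lambda>k. cis (s * of_int k)) \<circ> (\<lambda>g. g x))"
    using continuous_map_compose eval_pt_cont[OF x] by blast
  then have "continuous_map (Cp_top X) (subtopology euclidean circle) (char_pt X x s)"
    by (rule continuous_map_eq) (simp add: char_pt_def)
  moreover have "\<forall>f\<in>topspace (Cp_top X). \<forall>g\<in>topspace (Cp_top X).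
     char_pt X x s (Cp_add X f g) = char_pt X x s f * char_pt X x s g"
    using x by (simp add: char_pt_def cis_mult distrib_left)
  moreover have "char_pt X x s \<in> extensional (topspace (Cp_top X))" by (simp add: char_pt_def)
  ultimately show ?thesis unfolding characters_def by blast
qed

lemma compact_image_eval:
  assumes "compactin (Cp_top X) K" "x \<in> topspace X"
  shows "finite ((\<lambda>g. g x) ` K)"
  using image_compactin[OF assms(1) eval_pt_cont[OF assms(2)]]
  by (simp add: compactin_discrete_topology)

lemma char_pt_line_cont:
  assumes x: "x \<in> topspace X"
  shows "continuous_map euclideanreal (DUAL X) (\<lambda>t. char_pt X x (t * a))"
proof (rule continuous_into_dual)
  show "char_pt X x (t * a) \<in> chars X" for t using char_pt_in[OF x] .
  fix K U assume K: "compactin (Cp_top X) K" and U: "open (U::complex set)"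
  have KC: "K \<subseteq> Cp_carrier X" using compactin_subset_topspace[OF K] by simp
  let ?V = "(\<lambda>g. g x) ` K"
  have fin: "finite ?V" by (rule compact_image_eval[OF K x])
  have eq: "{t \<in> topspace euclideanreal. (char_pt X x (t * a)) ` K \<subseteq> U} =
        (\<Inter>k\<in>?V. (\<lambda>t. cis (t * a * of_int k)) -` U)"
    using KC by (auto simp: char_pt_def subset_iff)
  have "open (\<Inter>k\<in>?V. (\<lambda>t. cis (t * a * of_int k)) -` U)"
  proof (rule open_INT[OF fin], intro ballI)
    fix k show "open ((\<lambda>t. cis (t * a * of_int k)) -` U)"
      by (rule continuous_open_vimage[OF U]) (unfold cis_conv_exp, intro continuous_intros)
  qed
  then show "openin euclideanreal {t \<in> topspace euclideanreal. (char_pt X x (t * a)) ` K \<subseteq> U}"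
    unfolding eq by simp
qed

lemma cis_eq_imp: "cis a = cis b \<Longrightarrow> \<exists>n::int. a = b + 2 * pi * n"
  by (simp add: complex_eq_iff sin_cos_eq_iff[symmetric])

lemma cis_neq: assumes "0 < a - b" "a - b < 2 * pi" shows "cis a \<noteq> cis b"
proof
  assume "cis a = cis b"
  then obtain n :: int where n: "a = b + 2 * pi * n" using cis_eq_imp by blast
  then have "0 < 2 * pi * n" "2 * pi * n < 2 * pi" using assms by auto
  then have "0 < n" "n < 1" by (auto simp: zero_less_mult_iff)
  then show False by simp
qed

lemma arc_trig:
  fixes M :: nat and j :: int
  defines "e \<equiv> 1 / (real M + 1)"
  shows "((\<forall>t\<in>{0..1}. cis (t * (e * j)) \<notin> cis ` {e * M + e / 2 .. 2 * pi - e / 2}) \<and>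
          cis (e * j) \<notin> cis ` {- e / 2 .. e * M - e / 2}) \<longleftrightarrow> j = int M"
proof -
  have e0: "0 < e" "e \<le> 1" by (auto simp: e_def field_simps)
  have eM: "e * M + e = 1" by (simp add: e_def field_simps)
  have pi3: "3 < pi" by (rule pi_gt3)
  show ?thesis
  proof
    assume j: "j = int M"
    have p1: "cis (t * (e * j)) \<notin> cis ` {e * M + e / 2 .. 2 * pi - e / 2}" if t: "t \<in> {0..1}" for t
    proof
      assume "cis (t * (e * j)) \<in> cis ` {e * M + e / 2 .. 2 * pi - e / 2}"
      then obtain b where b: "b \<in> {e * M + e / 2 .. 2 * pi - e / 2}" "cis b = cis (t * (e * j))" by auto
      have h0: "0 \<le> t * (e * M)" using t e0 by auto
      have h1: "t * (e * M) \<le> e * M" using t e0 mult_left_le_one_le[of "e * M" t] by auto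
      have h3: "t * (e * j) = t * (e * M)" using j by simp
      have b1: "e * M + e / 2 \<le> b" "b \<le> 2 * pi - e / 2" using b(1) by auto
      have "0 < b - t * (e * j)" "b - t * (e * j) < 2 * pi"
        using h0 h1 h3 b1 e0 by linarith+
      then show False using cis_neq b(2) by metis
    qed
    have p2: "cis (e * j) \<notin> cis ` {- e / 2 .. e * M - e / 2}"
    proof
      assume "cis (e * j) \<in> cis ` {- e / 2 .. e * M - e / 2}"
      then obtain b where b: "b \<in> {- e / 2 .. e * M - e / 2}" "cis b = cis (e * j)" by auto
      have "0 < e * j - b" "e * j - b < 2 * pi" using b(1) e0 j eM pi3 by auto
      then show False using cis_neq b(2) by metis
    qed
    show "(\<forall>t\<in>{0..1}. cis (t * (e * j)) \<notin> cis ` {e * M + e / 2 .. 2 * pi - e / 2}) \<and>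
          cis (e * j) \<notin> cis ` {- e / 2 .. e * M - e / 2}" using p1 p2 by blast
  next
    assume A: "(\<forall>t\<in>{0..1}. cis (t * (e * j)) \<notin> cis ` {e * M + e / 2 .. 2 * pi - e / 2}) \<and>
          cis (e * j) \<notin> cis ` {- e / 2 .. e * M - e / 2}"
    show "j = int M"
    proof (rule ccontr)
      assume "j \<noteq> int M"
      then consider "j > int M" | "j < 0" | "0 \<le> j" "j < int M" by linarith
      then show False
      proof cases
        case 1
        then have jM: "real_of_int j \<ge> real M + 1" by linarith
        define t where "t = (e * M + e / 2) / (e * j)"
        have jpos: "e * j > 0" using e0 jM by (simp add: zero_less_mult_iff)
        have "e * M + e / 2 \<le> e * j"
        proof -
          have "e * M + e / 2 \<le> e * (real M + 1)" using e0 by (simp add: algebra_simps)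
          also have "\<dots> \<le> e * j" using jM e0 by (intro mult_left_mono) auto
          finally show ?thesis .
        qed
        then have t01: "t \<in> {0..1}" using jpos e0 by (auto simp: t_def field_simps)
        have "t * (e * j) = e * M + e / 2" using jpos unfolding t_def by (metis less_irrefl nonzero_eq_divide_eq)
        moreover have "e * M + e / 2 \<in> {e * M + e / 2 .. 2 * pi - e / 2}" using eM e0 pi3 by auto
        ultimately show False using A t01 by (metis image_eqI)
      next
        case 2
        define t where "t = 1 / (2 * (- real_of_int j))"
        have jn: "- real_of_int j \<ge> 1" using 2 by linarith
        have t01: "t \<in> {0..1}" using jn by (auto simp: t_def field_simps)
        have "t * (e * j) = - e / 2" using jn by (simp add: t_def field_simps)
        moreover have "cis (- e / 2) = cis (2 * pi - e / 2)"
          by (simp add: cis.ctr complex_eq_iff sin_diff cos_diff)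
        moreover have "2 * pi - e / 2 \<in> {e * M + e / 2 .. 2 * pi - e / 2}" using eM e0 pi3 by auto
        ultimately show False using A t01 by (metis image_eqI)
      next
        case 3
        then have "real_of_int j \<le> real M - 1" by linarith
        then have "e * j \<le> e * (real M - 1)" using e0 by (intro mult_left_mono) auto
        moreover have "0 \<le> e * j" using 3 e0 by simp
        ultimately have "e * j \<in> {- e / 2 .. e * M - e / 2}" using e0 by (auto simp: algebra_simps)
        then show False using A by blast
      qed
    qed
  qed
qed

definition clop :: "'a topology \<Rightarrow> 'a set \<Rightarrow> bool" where
  "clop X V \<longleftrightarrow> closedin X V \<and> openin X V"

lemma clop_Int: "clop X A \<Longrightarrow> clop X B \<Longrightarrow> clop X (A \<inter> B)"
  by (auto simp: clop_def)
lemma clop_Un: "clop X A \<Longrightarrow> clop X B \<Longrightarrow> clop X (A \<union> B)"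
  by (auto simp: clop_def)
lemma clop_diff: "clop X A \<Longrightarrow> clop X B \<Longrightarrow> clop X (A - B)"
  by (auto simp: clop_def)
lemma clop_topspace: "clop X (topspace X)"
  by (auto simp: clop_def)
lemma clop_empty: "clop X {}"
  by (auto simp: clop_def)
lemma clop_subset: "clop X A \<Longrightarrow> A \<subseteq> topspace X"
  by (auto simp: clop_def closedin_subset)

lemma sep_point:
  assumes t1: "t1_space X" and zd: "zero_dimensional X"
    and a: "a \<in> topspace X" and B: "finite B" "a \<notin> B"
  shows "\<exists>V. clop X V \<and> a \<in> V \<and> V \<inter> B = {}"
proof -
  have "closedin X (B \<inter> topspace X)"
    using t1 B(1) by (simp add: t1_space_closedin_finite)
  then have o: "openin X (topspace X - B \<inter> topspace X)" by (rule openin_diff[OF openin_topspace])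
  have ain: "a \<in> topspace X - B \<inter> topspace X" using a B by auto
  have nb: "\<forall>W x. openin X W \<and> x \<in> W \<longrightarrow> (\<exists>U V. openin X U \<and> (closedin X V \<and> openin X V) \<and> x \<in> U \<and> U \<subseteq> V \<and> V \<subseteq> W)"
    using zd unfolding zero_dimensional_def neighbourhood_base_of .
  obtain U V where UV: "openin X U" "closedin X V \<and> openin X V" "a \<in> U" "U \<subseteq> V" "V \<subseteq> topspace X - B \<inter> topspace X"
    using nb[rule_format, OF conjI[OF o ain]] by blast
  have "V \<inter> B = {}" using UV(5) by blast
  moreover have "a \<in> V" using UV(3,4) by blast
  ultimately show ?thesis using UV(2) unfolding clop_def by blast
qed

lemma sep_finite:
  assumes t1: "t1_space X" and zd: "zero_dimensional X"
    and A: "finite A" "A \<subseteq> topspace X" and B: "finite B" "A \<inter> B = {}"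
  shows "\<exists>V. clop X V \<and> A \<subseteq> V \<and> V \<inter> B = {}"
  using A B(2)
proof (induction A rule: finite_induct)
  case empty then show ?case using clop_empty by blast
next
  case (insert a A)
  then obtain V where V: "clop X V" "A \<subseteq> V" "V \<inter> B = {}" by auto
  obtain W where W: "clop X W" "a \<in> W" "W \<inter> B = {}"
  proof -
    have "a \<in> topspace X" "a \<notin> B" using insert.prems by auto
    then show ?thesis using sep_point[OF t1 zd _ B(1)] that by blast
  qed
  show ?case using V W by (intro exI[of _ "V \<union> W"]) (auto intro: clop_Un)
qed

lemma split_infinite:
  assumes t1: "t1_space X" and zd: "zero_dimensional X"
    and R: "clop X R" and E: "E \<subseteq> R" "infinite E"
  shows "\<exists>R' E' a U. clop X R' \<and> R' \<subseteq> R \<and> E' \<subseteq> R' \<and> E' \<subseteq> E \<and> infinite E' \<and>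
            a \<in> E \<and> clop X U \<and> a \<in> U \<and> U \<subseteq> R \<and> U \<inter> R' = {}"
proof -
  have "E \<noteq> {}" using E(2) by auto
  then obtain p where p: "p \<in> E" by blast
  have "infinite (E - {p})" using E(2) by simp
  then have "E - {p} \<noteq> {}" by (metis finite.emptyI)
  then obtain q where "q \<in> E - {p}" by blast
  then have q: "q \<in> E" "q \<noteq> p" by auto
  have Rt: "R \<subseteq> topspace X" using R by (rule clop_subset)
  obtain V where V: "clop X V" "p \<in> V" "V \<inter> {q} = {}"
    using sep_point[OF t1 zd, of p "{q}"] p q E(1) Rt by auto
  have "E = (E \<inter> V) \<union> (E - V)" by auto
  then have "infinite (E \<inter> V) \<or> infinite (E - V)" using E(2) by (metis finite_Un)
  then show ?thesis
  proof
    assume inf: "infinite (E \<inter> V)"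
    show ?thesis
      by (rule exI[of _ "R \<inter> V"], rule exI[of _ "E \<inter> V"], rule exI[of _ q], rule exI[of _ "R - V"])
         (use inf V R E(1) q in \<open>auto intro: clop_Int clop_diff\<close>)
  next
    assume inf: "infinite (E - V)"
    show ?thesis
      by (rule exI[of _ "R - V"], rule exI[of _ "E - V"], rule exI[of _ p], rule exI[of _ "R \<inter> V"])
         (use inf V R E(1) p in \<open>auto intro: clop_Int clop_diff\<close>)
  qed
qed

lemma cellular:
  assumes t1: "t1_space X" and zd: "zero_dimensional X"
    and D: "D \<subseteq> topspace X" "infinite D"
  shows "\<exists>(a :: nat \<Rightarrow> 'a) U. (\<forall>n. a n \<in> D \<and> clop X (U n) \<and> a n \<in> U n) \<and> (\<forall>m n. m \<noteq> n \<longrightarrow> U m \<inter> U n = {})"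
proof -
  define P where "P = (\<lambda>(n::nat) (s :: 'a set \<times> 'a set \<times> 'a \<times> 'a set).
     clop X (fst s) \<and> fst (snd s) \<subseteq> fst s \<and> infinite (fst (snd s)) \<and> fst (snd s) \<subseteq> D)"
  define Q where "Q = (\<lambda>(n::nat) (s :: 'a set \<times> 'a set \<times> 'a \<times> 'a set) (s' :: 'a set \<times> 'a set \<times> 'a \<times> 'a set).
     fst s' \<subseteq> fst s \<and> fst (snd (snd s')) \<in> fst (snd s) \<and> clop X (snd (snd (snd s'))) \<and>
     fst (snd (snd s')) \<in> snd (snd (snd s')) \<and> snd (snd (snd s')) \<subseteq> fst s \<and>
     snd (snd (snd s')) \<inter> fst s' = {})"
  have "\<exists>f. \<forall>n. P n (f n) \<and> Q n (f n) (f (Suc n))"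
  proof (rule dependent_nat_choice)
    show "\<exists>x. P 0 x"
      using D clop_topspace[of X] by (intro exI[of _ "(topspace X, D, undefined, undefined)"]) (simp add: P_def)
  next
    fix s n assume "P n s"
    then have s: "clop X (fst s)" "fst (snd s) \<subseteq> fst s" "infinite (fst (snd s))" "fst (snd s) \<subseteq> D"
      by (auto simp: P_def)
    obtain R' E' a U where *: "clop X R' \<and> R' \<subseteq> fst s \<and> E' \<subseteq> R' \<and> E' \<subseteq> fst (snd s) \<and> infinite E' \<and>
            a \<in> fst (snd s) \<and> clop X U \<and> a \<in> U \<and> U \<subseteq> fst s \<and> U \<inter> R' = {}"
      using split_infinite[OF t1 zd s(1) s(2) s(3)] by blast
    show "\<exists>s'. P (Suc n) s' \<and> Q n s s'"
      using * s(4) by (intro exI[of _ "(R', E', a, U)"]) (auto simp: P_def Q_def)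
  qed
  then obtain f where f: "\<And>n. P n (f n)" "\<And>n. Q n (f n) (f (Suc n))" by blast
  define R where "R = (\<lambda>n. fst (f n))"
  define a where "a = (\<lambda>n. fst (snd (snd (f (Suc n)))))"
  define U where "U = (\<lambda>n. snd (snd (snd (f (Suc n)))))"
  have Rdec: "R (Suc n) \<subseteq> R n" for n using f(2)[of n] by (simp add: Q_def R_def)
  have UR: "U n \<subseteq> R n" "U n \<inter> R (Suc n) = {}" for n using f(2)[of n] by (auto simp: Q_def R_def U_def)
  have aD: "a n \<in> D" for n using f(2)[of n] f(1)[of n] by (auto simp: Q_def P_def a_def)
  have aU: "a n \<in> U n" "clop X (U n)" for n using f(2)[of n] by (auto simp: Q_def a_def U_def)
  have dec: "decseq R" by (rule decseq_SucI) (use Rdec in auto)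
  have disj: "U m \<inter> U n = {}" if "m < n" for m n
  proof -
    have "R n \<subseteq> R (Suc m)" using decseqD[OF dec, of "Suc m" n] that by simp
    then show ?thesis using UR[of n] UR[of m] by blast
  qed
  have dj: "\<forall>m n. m \<noteq> n \<longrightarrow> U m \<inter> U n = {}"
  proof (intro allI impI)
    fix m n :: nat assume "m \<noteq> n"
    then consider "m < n" | "n < m" by linarith
    then show "U m \<inter> U n = {}" using disj by cases (auto simp: Int_commute)
  qed
  have ad: "(\<forall>n. a n \<in> D \<and> clop X (U n) \<and> a n \<in> U n)" using aD aU by blast
  show ?thesis
    apply (rule exI[where x=a])
    apply (rule exI[where x=U])
    using ad dj by blast
qed

lemma ccut_clop_in: "f \<in> Cp_carrier X \<Longrightarrow> clop X V \<Longrightarrow> ccut X V f \<in> Cp_carrier X"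
  by (simp add: clop_def)

lemma kills_Int:
  assumes t1: "t1_space X" and zd: "zero_dimensional X" and c: "c \<in> chars X"
    and F: "finite F1" "F1 \<subseteq> topspace X" "finite F2" "F2 \<subseteq> topspace X"
    and k: "kills X c F1" "kills X c F2"
  shows "kills X c (F1 \<inter> F2)"
  unfolding kills_def
proof (intro ballI impI)
  fix g assume g: "g \<in> Cp_carrier X" "\<forall>x\<in>F1 \<inter> F2. g x = 0"
  obtain V where V: "clop X V" "F1 - F2 \<subseteq> V" "V \<inter> (F2 - F1) = {}"
    using sep_finite[OF t1 zd, of "F1 - F2" "F2 - F1"] F by auto
  define V' where "V' = topspace X - V"
  have V': "clop X V'" unfolding V'_def by (intro clop_diff clop_topspace V(1))
  define g1 where "g1 = ccut X V g"
  define g2 where "g2 = ccut X V' g"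
  have g1C: "g1 \<in> Cp_carrier X" unfolding g1_def by (rule ccut_clop_in[OF g(1) V(1)])
  have g2C: "g2 \<in> Cp_carrier X" unfolding g2_def by (rule ccut_clop_in[OF g(1) V'])
  have "g = Cp_add X g1 g2"
    by (rule Cp_eqI[OF g(1) Cp_add_in[OF g1C g2C]]) (auto simp: g1_def g2_def V'_def)
  then have cg: "c g = c g1 * c g2" using char_hom[OF c g1C g2C] by simp
  have "\<forall>x\<in>F2. g1 x = 0"
  proof
    fix x assume x: "x \<in> F2"
    then have xt: "x \<in> topspace X" using F(4) by blast
    show "g1 x = 0"
    proof (cases "x \<in> V")
      case True
      then have "x \<in> F1" using V(3) x by blast
      then show ?thesis using g(2) x xt True by (simp add: g1_def)
    qed (simp add: g1_def xt)
  qed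
  then have "c g1 = 1" using k(2) g1C by (simp add: kills_def)
  moreover have "\<forall>x\<in>F1. g2 x = 0"
  proof
    fix x assume x: "x \<in> F1"
    then have xt: "x \<in> topspace X" using F(2) by blast
    show "g2 x = 0"
    proof (cases "x \<in> V'")
      case True
      then have "x \<in> F2" using V(2) x by (auto simp: V'_def)
      then show ?thesis using g(2) x xt True by (simp add: g2_def)
    qed (simp add: g2_def xt)
  qed
  then have "c g2 = 1" using k(1) g2C by (simp add: kills_def)
  ultimately show "c g = 1" using cg by simp
qed

definition supp_prop :: "'a topology \<Rightarrow> (('a \<Rightarrow> int) \<Rightarrow> complex) \<Rightarrow> 'a set \<Rightarrow> bool" where
  "supp_prop X c S \<longleftrightarrow> finite S \<and> S \<subseteq> topspace X \<and> kills X c S \<and>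
     (\<forall>F. finite F \<and> F \<subseteq> topspace X \<and> kills X c F \<longrightarrow> S \<subseteq> F)"

definition supp :: "'a topology \<Rightarrow> (('a \<Rightarrow> int) \<Rightarrow> complex) \<Rightarrow> 'a set" where
  "supp X c = (SOME S. supp_prop X c S)"

lemma supp_ex:
  assumes t1: "t1_space X" and zd: "zero_dimensional X" and c: "c \<in> chars X"
  shows "\<exists>S. supp_prop X c S"
proof -
  define P where "P = (\<lambda>S. finite S \<and> S \<subseteq> topspace X \<and> kills X c S)"
  have ex: "\<exists>n S. P S \<and> card S = n" using char_finite_kill[OF c] by (auto simp: P_def)
  define n where "n = (LEAST n. \<exists>S. P S \<and> card S = n)"
  obtain S where S: "P S" "card S = n"
    using LeastI_ex[OF ex] unfolding n_def by blast
  have "S \<subseteq> F" if F: "P F" for F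
  proof -
    have "P (S \<inter> F)" using S(1) F kills_Int[OF t1 zd c] by (auto simp: P_def)
    then have "n \<le> card (S \<inter> F)" unfolding n_def by (intro Least_le) blast
    then have "card (S \<inter> F) = card S" using S card_mono[of S "S \<inter> F"]
      by (metis P_def Int_lower1 card_mono le_antisym)
    then have "S \<inter> F = S" using S(1) by (intro card_subset_eq) (auto simp: P_def)
    then show ?thesis by blast
  qed
  then show ?thesis using S(1) unfolding supp_prop_def P_def by blast
qed

lemma supp_props:
  assumes t1: "t1_space X" and zd: "zero_dimensional X" and c: "c \<in> chars X"
  shows "finite (supp X c)" "supp X c \<subseteq> topspace X" "kills X c (supp X c)"
    "\<And>F. finite F \<Longrightarrow> F \<subseteq> topspace X \<Longrightarrow> kills X c F \<Longrightarrow> supp X c \<subseteq> F"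
proof -
  have "supp_prop X c (supp X c)" unfolding supp_def by (rule someI_ex[OF supp_ex[OF assms]])
  then show "finite (supp X c)" "supp X c \<subseteq> topspace X" "kills X c (supp X c)"
    "\<And>F. finite F \<Longrightarrow> F \<subseteq> topspace X \<Longrightarrow> kills X c F \<Longrightarrow> supp X c \<subseteq> F"
    unfolding supp_prop_def by blast+
qed

lemma supp_bad:
  assumes t1: "t1_space X" and zd: "zero_dimensional X" and c: "c \<in> chars X"
    and a: "a \<in> supp X c" and U: "clop X U" "a \<in> U"
  shows "\<exists>f\<in>Cp_carrier X. (\<forall>x\<in>topspace X - U. f x = 0) \<and> 1 \<le> cmod (c f - 1)"
proof -
  let ?S = "supp X c"
  note sp = supp_props[OF t1 zd c]
  have "\<not> kills X c (?S - {a})"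
  proof
    assume "kills X c (?S - {a})"
    then have "?S \<subseteq> ?S - {a}" using sp by (intro sp(4)) auto
    then show False using a by blast
  qed
  then obtain g where g: "g \<in> Cp_carrier X" "\<forall>x\<in>?S - {a}. g x = 0" "c g \<noteq> 1"
    unfolding kills_def by blast
  have at: "a \<in> topspace X" using a sp(2) by blast
  obtain V where V: "clop X V" "a \<in> V" "V \<inter> (?S - {a}) = {}"
    using sep_point[OF t1 zd at, of "?S - {a}"] sp(1) by auto
  define W where "W = U \<inter> V"
  have W: "clop X W" "a \<in> W" using U V by (auto simp: W_def intro: clop_Int)
  define h where "h = ccut X W g"
  have hC: "h \<in> Cp_carrier X" unfolding h_def by (rule ccut_clop_in[OF g(1) W(1)])
  have "c h = c g"
  proof (rule kills_agree[OF c sp(3) sp(2) hC g(1)])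
    fix s assume s: "s \<in> ?S"
    then have st: "s \<in> topspace X" using sp(2) by blast
    show "h s = g s"
    proof (cases "s = a")
      case True then show ?thesis using W(2) st by (simp add: h_def)
    next
      case False
      then have "s \<notin> W" using V(3) s by (auto simp: W_def)
      then show ?thesis using g(2) s False st by (simp add: h_def)
    qed
  qed
  then have ch1: "c h \<noteq> 1" using g(3) by simp
  have "cmod (c h) = 1" using char_circle[OF c hC] by (simp add: circle_def)
  then obtain n where n: "\<not> cmod (c h ^ n - 1) < 1" using circle_small_powers ch1 by blast
  define f where "f = cscale X (int n) h"
  have fC: "f \<in> Cp_carrier X" unfolding f_def by (rule cscale_in[OF hC])
  have "c f = c h ^ n" unfolding f_def by (rule char_scale[OF c hC])
  moreover have "\<forall>x\<in>topspace X - U. f x = 0" by (auto simp: f_def h_def W_def)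
  ultimately show ?thesis using fC n by (intro bexI[of _ f]) auto
qed

lemma compact_seq:
  assumes fC: "\<And>n. fn n \<in> Cp_carrier X"
    and fin: "\<And>x. x \<in> topspace X \<Longrightarrow> finite {n. fn n x \<noteq> 0}"
  shows "compactin (Cp_top X) (insert (cz X) (fn ` {N..}))"
  unfolding compactin_def
proof (intro conjI allI impI)
  show "insert (cz X) (fn ` {N..}) \<subseteq> topspace (Cp_top X)" using fC by auto
  fix \<U> assume \<U>: "(\<forall>U\<in>\<U>. openin (Cp_top X) U) \<and> insert (cz X) (fn ` {N..}) \<subseteq> \<Union>\<U>"
  then obtain U0 where U0: "U0 \<in> \<U>" "cz X \<in> U0" by blast
  then have "openin (Cp_top X) U0" using \<U> by blast
  then obtain F0 where F0: "finite F0" "F0 \<subseteq> topspace X" "\<forall>g\<in>Cp_carrier X. (\<forall>x\<in>F0. g x = cz X x) \<longrightarrow> g \<in> U0"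
    using U0(2) unfolding openin_Cp by blast
  define Bad where "Bad = (\<Union>x\<in>F0. {n. fn n x \<noteq> 0})"
  have fB: "finite Bad" unfolding Bad_def using F0(1,2) fin by blast
  define pick where "pick = (\<lambda>n. SOME V. V \<in> \<U> \<and> fn n \<in> V)"
  have pick: "pick n \<in> \<U> \<and> fn n \<in> pick n" if "n \<ge> N" for n
  proof -
    have "\<exists>V. V \<in> \<U> \<and> fn n \<in> V" using \<U> that by blast
    then show ?thesis unfolding pick_def by (rule someI_ex)
  qed
  define \<F> where "\<F> = insert U0 (pick ` (Bad \<inter> {N..}))"
  have "finite \<F>" using fB by (simp add: \<F>_def)
  moreover have "\<F> \<subseteq> \<U>" using U0(1) pick by (auto simp: \<F>_def)
  moreover have "insert (cz X) (fn ` {N..}) \<subseteq> \<Union>\<F>"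
  proof
    fix y assume "y \<in> insert (cz X) (fn ` {N..})"
    then consider "y = cz X" | n where "n \<ge> N" "y = fn n" by auto
    then show "y \<in> \<Union>\<F>"
    proof cases
      case 1 then show ?thesis using U0 by (auto simp: \<F>_def)
    next
      case 2
      show ?thesis
      proof (cases "n \<in> Bad")
        case True then show ?thesis using 2 pick[of n] by (auto simp: \<F>_def)
      next
        case False
        then have "\<forall>x\<in>F0. fn n x = cz X x" using F0(2) by (auto simp: Bad_def)
        then have "fn n \<in> U0" using F0(3) fC by blast
        then show ?thesis using 2 by (auto simp: \<F>_def)
      qed
    qed
  qed
  ultimately show "\<exists>\<F>. finite \<F> \<and> \<F> \<subseteq> \<U> \<and> insert (cz X) (fn ` {N..}) \<subseteq> \<Union>\<F>" by blast
qed

lemma equicont: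
  assumes tk: "tikhonov_space X" and zd: "zero_dimensional X" and K: "compactin (DUAL X) K"
  shows "\<exists>F. finite F \<and> F \<subseteq> topspace X \<and> (\<forall>c\<in>K. kills X c F)"
proof (rule ccontr)
  assume nF: "\<not> (\<exists>F. finite F \<and> F \<subseteq> topspace X \<and> (\<forall>c\<in>K. kills X c F))"
  have t1: "t1_space X" using tk by (simp add: tikhonov_space_def)
  have KC: "K \<subseteq> chars X" using compactin_subset_topspace[OF K] by simp
  note sp = supp_props[OF t1 zd]
  define D where "D = (\<Union>c\<in>K. supp X c)"
  have Dt: "D \<subseteq> topspace X" using sp(2) KC by (auto simp: D_def)
  have Dinf: "infinite D"
  proof
    assume fD: "finite D"
    have "\<forall>c\<in>K. kills X c D"
    proof
      fix c assume cK: "c \<in> K"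
      then have cc: "c \<in> chars X" using KC by blast
      have "supp X c \<subseteq> D" using cK unfolding D_def by blast
      then show "kills X c D" using kills_mono[OF sp(3)[OF cc]] by blast
    qed
    then have "\<exists>F. finite F \<and> F \<subseteq> topspace X \<and> (\<forall>c\<in>K. kills X c F)" using fD Dt by blast
    then show False using nF by blast
  qed
  obtain a :: "nat \<Rightarrow> 'a" and U :: "nat \<Rightarrow> 'a set" where aU: "\<forall>n. a n \<in> D \<and> clop X (U n) \<and> a n \<in> U n" and dj: "\<forall>m n. m \<noteq> n \<longrightarrow> U m \<inter> U n = {}"
    using cellular[OF t1 zd Dt Dinf] by metis
  have "\<forall>n. \<exists>p. fst p \<in> K \<and> snd p \<in> Cp_carrier X \<and> (\<forall>x\<in>topspace X - U n. snd p x = 0) \<and> 1 \<le> cmod (fst p (snd p) - 1)"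
  proof
    fix n
    have "a n \<in> D" using aU by blast
    then obtain c where c: "c \<in> K" "a n \<in> supp X c" unfolding D_def by blast
    have cc: "c \<in> chars X" using c(1) KC by blast
    have Un: "clop X (U n)" "a n \<in> U n" using aU by blast+
    obtain f where "f \<in> Cp_carrier X" "\<forall>x\<in>topspace X - U n. f x = 0" "1 \<le> cmod (c f - 1)"
      using supp_bad[OF t1 zd cc c(2) Un] by blast
    then show "\<exists>p. fst p \<in> K \<and> snd p \<in> Cp_carrier X \<and> (\<forall>x\<in>topspace X - U n. snd p x = 0) \<and> 1 \<le> cmod (fst p (snd p) - 1)"
      using c(1) by (intro exI[of _ "(c, f)"]) simp
  qed
  from choice[OF this] obtain cf where cf:
    "\<forall>n. fst (cf n) \<in> K \<and> snd (cf n) \<in> Cp_carrier X \<and> (\<forall>x\<in>topspace X - U n. snd (cf n) x = 0) \<and> 1 \<le> cmod (fst (cf n) (snd (cf n)) - 1)"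
    by (elim exE)
  define ch where "ch = (\<lambda>n. fst (cf n))"
  define fn where "fn = (\<lambda>n. snd (cf n))"
  have chK: "ch n \<in> K" for n using cf by (simp add: ch_def)
  have fnC: "fn n \<in> Cp_carrier X" for n using cf by (simp add: fn_def)
  have fn0: "fn n x = 0" if "x \<in> topspace X" "x \<notin> U n" for n x using cf that by (simp add: fn_def)
  have bad: "1 \<le> cmod (ch n (fn n) - 1)" for n using cf by (simp add: ch_def fn_def)
  have finU: "finite {n. x \<in> U n}" for x
  proof (cases "\<exists>n0. x \<in> U n0")
    case True
    then obtain n0 where "x \<in> U n0" by blast
    then have "{n. x \<in> U n} \<subseteq> {n0}" using dj by blast
    then show ?thesis using finite_subset by blast
  next
    case False then show ?thesis by simp
  qed
  have finnz: "finite {n. fn n x \<noteq> 0}" if "x \<in> topspace X" for x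
    using finU[of x] fn0[OF that] by (metis (mono_tags, lifting) finite_subset mem_Collect_eq subsetI)
  define C where "C = (\<lambda>N. insert (cz X) (fn ` {N..}))"
  have Cc: "compactin (Cp_top X) (C N)" for N
    unfolding C_def by (rule compact_seq[OF fnC finnz])
  have exN: "\<exists>N. \<forall>n\<ge>N. \<forall>s\<in>supp X c. fn n s = 0" if c: "c \<in> K" for c
  proof -
    have fS: "finite (supp X c)" "supp X c \<subseteq> topspace X" using sp(1,2) c KC by auto
    have "finite (\<Union>s\<in>supp X c. {n. s \<in> U n})" using fS(1) finU by blast
    then obtain N where N: "\<forall>n\<in>(\<Union>s\<in>supp X c. {n. s \<in> U n}). n < N"
      unfolding finite_nat_set_iff_bounded by blast
    have "\<forall>n\<ge>N. \<forall>s\<in>supp X c. fn n s = 0"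
    proof (intro allI impI ballI)
      fix n s assume "N \<le> n" "s \<in> supp X c"
      then have "s \<notin> U n" using N by force
      then show "fn n s = 0" using fn0 fS(2) \<open>s \<in> supp X c\<close> by blast
    qed
    then show ?thesis by blast
  qed
  define Nc where "Nc = (\<lambda>c. SOME N. \<forall>n\<ge>N. \<forall>s\<in>supp X c. fn n s = 0)"
  have Nc: "\<forall>n\<ge>Nc c. \<forall>s\<in>supp X c. fn n s = 0" if "c \<in> K" for c
    unfolding Nc_def by (rule someI_ex[OF exN[OF that]])
  define Ob where "Ob = (\<lambda>c. {d \<in> chars X. d ` C (Nc c) \<subseteq> ball 1 1})"
  have Oo: "openin (DUAL X) (Ob c)" for c
    unfolding Ob_def by (rule openin_dual_sub[OF Cc]) simp
  have cO: "c \<in> Ob c" if c: "c \<in> K" for c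
  proof -
    have cc: "c \<in> chars X" using c KC by blast
    have "c g = 1" if g: "g \<in> C (Nc c)" for g
    proof -
      consider "g = cz X" | n where "n \<ge> Nc c" "g = fn n" using g by (auto simp: C_def)
      then show ?thesis
      proof cases
        case 1 then show ?thesis using char_zero[OF cc] by simp
      next
        case 2
        have "c (fn n) = c (cz X)"
          by (rule kills_agree[OF cc sp(3)[OF cc] sp(2)[OF cc] fnC cz_in])
             (use Nc[OF c] 2 sp(2)[OF cc] in auto)
        then show ?thesis using 2 char_zero[OF cc] by simp
      qed
    qed
    then show ?thesis using cc by (auto simp: Ob_def)
  qed
  have cov: "(\<forall>V\<in>Ob ` K. openin (DUAL X) V) \<and> K \<subseteq> \<Union>(Ob ` K)" using cO Oo by blast
  have Kc: "\<forall>\<U>. (\<forall>U\<in>\<U>. openin (DUAL X) U) \<and> K \<subseteq> \<Union>\<U> \<longrightarrow> (\<exists>\<F>. finite \<F> \<and> \<F> \<subseteq> \<U> \<and> K \<subseteq> \<Union>\<F>)"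
    using K unfolding compactin_def by (rule conjunct2)
  obtain \<F> where \<F>: "finite \<F>" "\<F> \<subseteq> Ob ` K" "K \<subseteq> \<Union>\<F>"
    using Kc[rule_format, OF cov] by blast
  then obtain K' where K': "K' \<subseteq> K" "finite K'" "\<F> = Ob ` K'"
    using finite_subset_image[OF \<F>(1,2)] by blast
  have "finite (Nc ` K')" using K'(2) by simp
  then obtain Nm where Nm: "\<forall>n\<in>Nc ` K'. n < Nm" unfolding finite_nat_set_iff_bounded by blast
  have "ch Nm \<in> \<Union>(Ob ` K')" using chK \<F>(3) K'(3) by blast
  then obtain c where c: "c \<in> K'" "ch Nm \<in> Ob c" by blast
  have "Nc c \<le> Nm" using Nm c(1) by fastforce
  then have "fn Nm \<in> C (Nc c)" by (auto simp: C_def)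
  then have "ch Nm (fn Nm) \<in> ball 1 1" using c(2) by (auto simp: Ob_def)
  then have "cmod (ch Nm (fn Nm) - 1) < 1" by (simp add: dist_norm norm_minus_commute)
  then show False using bad[of Nm] by simp
qed

abbreviation "BID X \<equiv> dual_top (DUAL X) (dual_add (Cp_top X))"

lemma closed_cis_image: "closed (cis ` {a..b})"
proof -
  have "compact (cis ` {a..b})"
    by (rule compact_continuous_image) (intro continuous_intros, simp)
  then show ?thesis by (rule compact_imp_closed)
qed

lemma sep_W:
  assumes x: "x \<in> topspace X"
  shows "\<exists>W. openin (BID X) W \<and> (\<forall>g\<in>Cp_carrier X. EV X g \<in> W \<longleftrightarrow> g x = m)"
proof -
  define M where "M = nat \<bar>m\<bar>"
  define \<sigma> :: real where "\<sigma> = (if m \<ge> 0 then 1 else -1)"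
  define e where "e = 1 / (real M + 1)"
  define \<theta> where "\<theta> = \<sigma> * e"
  define K1 where "K1 = (\<lambda>t. char_pt X x (t * \<theta>)) ` {0..1}"
  define B1 where "B1 = cis ` {e * M + e / 2 .. 2 * pi - e / 2}"
  define K2 where "K2 = {char_pt X x \<theta>}"
  define B2 where "B2 = cis ` {- e / 2 .. e * M - e / 2}"
  have K1c: "compactin (DUAL X) K1"
    unfolding K1_def by (rule image_compactin[OF _ char_pt_line_cont[OF x]]) simp
  have K2c: "compactin (DUAL X) K2"
    unfolding K2_def using char_pt_in[OF x] by simp
  define W where "W = {c \<in> characters (DUAL X) (dual_add (Cp_top X)). c ` K1 \<subseteq> - B1} \<inter>
                      {c \<in> characters (DUAL X) (dual_add (Cp_top X)). c ` K2 \<subseteq> - B2}"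
  have "openin (BID X) W"
    unfolding W_def
    by (intro openin_Int openin_dual_sub K1c K2c open_Compl) (simp_all add: B1_def B2_def closed_cis_image)
  moreover have "EV X g \<in> W \<longleftrightarrow> g x = m" if g: "g \<in> Cp_carrier X" for g
  proof -
    define j where "j = (if m \<ge> 0 then g x else - g x)"
    have thj: "\<theta> * of_int (g x) = e * of_int j" by (simp add: \<theta>_def \<sigma>_def j_def)
    have ev: "EV X g (char_pt X x s) = cis (s * of_int (g x))" for s
      using char_pt_in[OF x] g by (simp add: EV_apply char_pt_def)
    have i1: "EV X g ` K1 = (\<lambda>t. cis (t * (e * j))) ` {0..1}"
      unfolding K1_def image_image ev by (simp add: mult.assoc thj)
    have i2: "EV X g ` K2 = {cis (e * j)}"
      unfolding K2_def using ev[of \<theta>] thj by simp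
    have "EV X g \<in> W \<longleftrightarrow> ((\<forall>t\<in>{0..1}. cis (t * (e * j)) \<notin> B1) \<and> cis (e * j) \<notin> B2)"
    proof -
      have "EV X g \<in> W \<longleftrightarrow> EV X g ` K1 \<subseteq> - B1 \<and> EV X g ` K2 \<subseteq> - B2"
        using EV_in[OF g] by (simp add: W_def)
      then show ?thesis unfolding i1 i2 by auto
    qed
    also have "\<dots> \<longleftrightarrow> j = int M" unfolding B1_def B2_def e_def by (rule arc_trig)
    also have "\<dots> \<longleftrightarrow> g x = m" by (auto simp: j_def M_def)
    finally show ?thesis .
  qed
  ultimately show ?thesis by blast
qed

lemma openin_finite_Inter:
  assumes "finite F" "\<And>x. x \<in> F \<Longrightarrow> openin T (W x)"
  shows "openin T (topspace T \<inter> (\<Inter>x\<in>F. W x))"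
  using assms
proof (induction F rule: finite_induct)
  case empty then show ?case by simp
next
  case (insert a F)
  have "topspace T \<inter> (\<Inter>x\<in>insert a F. W x) = W a \<inter> (topspace T \<inter> (\<Inter>x\<in>F. W x))" by auto
  then show ?case using insert by auto
qed

theorem main:
  fixes X :: "'a topology"
  assumes "tikhonov_space X"
    and "zero_dimensional X"
  shows "top_iso_onto_image (Cp_top X) (Cp_add X)
           (dual_top (dual_top (Cp_top X) (Cp_add X)) (dual_add (Cp_top X)))
           (dual_add (dual_top (Cp_top X) (Cp_add X)))
           (evaluation (Cp_top X) (Cp_add X))"
proof -
  have sub: "EV X ` Cp_carrier X \<subseteq> topspace (BID X)"
    using EV_in by auto
  have inj: "inj_on (EV X) (Cp_carrier X)"
  proof (rule inj_onI)
    fix f g assume f: "f \<in> Cp_carrier X" and g: "g \<in> Cp_carrier X" and eq: "EV X f = EV X g"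
    show "f = g"
    proof (rule Cp_eqI[OF f g])
      fix x assume x: "x \<in> topspace X"
      obtain W where W: "\<forall>h\<in>Cp_carrier X. EV X h \<in> W \<longleftrightarrow> h x = f x" using sep_W[OF x] by blast
      have "EV X f \<in> W" using W f by blast
      then have "EV X g \<in> W" using eq by simp
      then have "g x = f x" using W g by simp
      then show "f x = g x" by simp
    qed
  qed
  have cont: "continuous_map (Cp_top X) (BID X) (EV X)"
  proof (rule continuous_into_dual)
    show "EV X g \<in> characters (DUAL X) (dual_add (Cp_top X))" if "g \<in> topspace (Cp_top X)" for g
      using EV_in that by simp
    fix K U assume K: "compactin (DUAL X) K" and U: "open (U :: complex set)"
    obtain F where F: "finite F" "F \<subseteq> topspace X" "\<forall>c\<in>K. kills X c F"
      using equicont[OF assms K] by blast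
    have KC: "K \<subseteq> chars X" using compactin_subset_topspace[OF K] by simp
    show "openin (Cp_top X) {g \<in> topspace (Cp_top X). EV X g ` K \<subseteq> U}"
      unfolding openin_Cp
    proof (intro conjI ballI)
      fix g0 assume g0: "g0 \<in> {g \<in> topspace (Cp_top X). EV X g ` K \<subseteq> U}"
      show "\<exists>F. finite F \<and> F \<subseteq> topspace X \<and> (\<forall>g\<in>Cp_carrier X. (\<forall>x\<in>F. g x = g0 x) \<longrightarrow> g \<in> {g \<in> topspace (Cp_top X). EV X g ` K \<subseteq> U})"
      proof (intro exI[of _ F] conjI ballI impI F(1,2))
        fix g assume g: "g \<in> Cp_carrier X" "\<forall>x\<in>F. g x = g0 x"
        have "EV X g c \<in> U" if c: "c \<in> K" for c
        proof -
          have "c g = c g0"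
            using kills_agree[of c X F g g0] KC c F g g0 by auto
          then show ?thesis using g0 c KC by (auto simp: EV_apply subset_iff)
        qed
        then show "g \<in> {g \<in> topspace (Cp_top X). EV X g ` K \<subseteq> U}" using g by auto
      qed
    qed auto
  qed
  have opn: "open_map (Cp_top X) (subtopology (BID X) (EV X ` Cp_carrier X)) (EV X)"
    unfolding open_map_def
  proof (intro allI impI)
    fix U assume U: "openin (Cp_top X) U"
    have UC: "U \<subseteq> Cp_carrier X" using openin_subset[OF U] by simp
    show "openin (subtopology (BID X) (EV X ` Cp_carrier X)) (EV X ` U)"
    proof (subst openin_subopen, intro ballI)
      fix y assume "y \<in> EV X ` U"
      then obtain f0 where f0: "f0 \<in> U" "y = EV X f0" by blast
      obtain F where F: "finite F" "F \<subseteq> topspace X" "\<forall>g\<in>Cp_carrier X. (\<forall>x\<in>F. g x = f0 x) \<longrightarrow> g \<in> U"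
        using U f0(1) unfolding openin_Cp by blast
      have "\<forall>x\<in>F. \<exists>W. openin (BID X) W \<and> (\<forall>g\<in>Cp_carrier X. EV X g \<in> W \<longleftrightarrow> g x = f0 x)"
      proof (intro ballI)
        fix x assume "x \<in> F"
        then have "x \<in> topspace X" using F(2) by blast
        then show "\<exists>W. openin (BID X) W \<and> (\<forall>g\<in>Cp_carrier X. EV X g \<in> W \<longleftrightarrow> g x = f0 x)"
          by (rule sep_W)
      qed
      from bchoice[OF this] obtain Wf where Wf0: "\<forall>x\<in>F. openin (BID X) (Wf x) \<and> (\<forall>g\<in>Cp_carrier X. EV X g \<in> Wf x \<longleftrightarrow> g x = f0 x)"
        by (elim exE)
      then have Wf: "\<And>x. x \<in> F \<Longrightarrow> openin (BID X) (Wf x) \<and> (\<forall>g\<in>Cp_carrier X. EV X g \<in> Wf x \<longleftrightarrow> g x = f0 x)"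
        by blast
      define T where "T = EV X ` Cp_carrier X \<inter> (topspace (BID X) \<inter> (\<Inter>x\<in>F. Wf x))"
      have "openin (subtopology (BID X) (EV X ` Cp_carrier X)) T"
        unfolding T_def by (intro openin_subtopology_Int2 openin_finite_Inter F(1)) (use Wf in simp)
      moreover have "y \<in> T"
      proof -
        have f0C: "f0 \<in> Cp_carrier X" using f0(1) UC by blast
        have "\<forall>x\<in>F. EV X f0 \<in> Wf x" using Wf f0C by blast
        moreover have "EV X f0 \<in> topspace (BID X)" using sub f0C by blast
        ultimately show ?thesis using f0C unfolding T_def f0(2) by blast
      qed
      moreover have "T \<subseteq> EV X ` U"
      proof
        fix z assume "z \<in> T"
        then obtain g where g: "g \<in> Cp_carrier X" "z = EV X g" "\<forall>x\<in>F. EV X g \<in> Wf x" unfolding T_def by blast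
        then have "\<forall>x\<in>F. g x = f0 x" using Wf by blast
        then have "g \<in> U" using F(3) g(1) by blast
        then show "z \<in> EV X ` U" using g(2) by blast
      qed
      ultimately show "\<exists>T. openin (subtopology (BID X) (EV X ` Cp_carrier X)) T \<and> y \<in> T \<and> T \<subseteq> EV X ` U"
        by blast
    qed
  qed
  have hm: "homeomorphic_map (Cp_top X) (subtopology (BID X) (EV X ` Cp_carrier X)) (EV X)"
  proof (rule bijective_open_imp_homeomorphic_map)
    show "continuous_map (Cp_top X) (subtopology (BID X) (EV X ` Cp_carrier X)) (EV X)"
      using cont by (simp add: continuous_map_in_subtopology)
    show "open_map (Cp_top X) (subtopology (BID X) (EV X ` Cp_carrier X)) (EV X)" by (rule opn)
    show "EV X ` topspace (Cp_top X) = topspace (subtopology (BID X) (EV X ` Cp_carrier X))"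
      using sub by auto
    show "inj_on (EV X) (topspace (Cp_top X))" using inj by simp
  qed
  have hom: "\<forall>f\<in>topspace (Cp_top X). \<forall>g\<in>topspace (Cp_top X).
      EV X (Cp_add X f g) = dual_add (DUAL X) (EV X f) (EV X g)"
    using EV_hom[where X=X] by simp
  show ?thesis
    unfolding top_iso_onto_image_def
    using sub hm hom topspace_Cp by (intro conjI) simp_all
qed

theorem proposition6p5:
  fixes X :: "'a topology"
  assumes "tikhonov_space X"
    and "zero_dimensional X"
    and "N_compact X"
    and "\<not> measurable_cardinality (topspace X)"
  shows "top_iso_onto_image (Cp_top X) (Cp_add X)
           (dual_top (dual_top (Cp_top X) (Cp_add X)) (dual_add (Cp_top X)))
           (dual_add (dual_top (Cp_top X) (Cp_add X)))
           (evaluation (Cp_top X) (Cp_add X))"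
  by (rule main[OF assms(1,2)])

end
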